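(* Let $n\ge2$, $s\in(0,1)$, $0<\lambda\le\Lambda<\infty$, and let $L$ be an operator of the form $Lu(x)=\mathrm{P.V.}\int_{\mathbb{R}^n}(u(x)-u(x+y))K(y)\,dy$ with $K(y)=K(-y)$ and $\lambda|y|^{-n-2s}\le K(y)\le\Lambda|y|^{-n-2s}$ for all $y$. Let $R>0$, $0<\kappa<R$, and let $\Omega\subset\mathbb{R}^n$ be an open set satisfying property $(\mathcal{P}_{R,\kappa})$: for all $0<r<R$ and all $z\in\partial\Omega$ there exists $x_{r,z}\in\Omega^c$ with $B_{\kappa r}(x_{r,z})\subset\Omega^c\cap B_r(z)$. Then there exist $d_0=d_0(s,R,\Omega)>0$ and $c_0=c_0(n,s,\lambda,\kappa)>0$ such that \[ L\chi_\Omega(x)\ge c_0\, d_\Omega(x)^{-2s}\qquad\text{for all }x\in\Omega\text{ with } d_\Omega(x)<d_0. \]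
   Context: $\chi_\Omega$ is the indicator function of $\Omega$ and $d_\Omega(x)=\mathrm{dist}(x,\Omega^c)$. *)

theory Defs
  imports "HOL-Analysis.Analysis"
begin

definition dOmega :: "('a::metric_space) set \<Rightarrow> 'a \<Rightarrow> real" where
  "dOmega \<Omega> x = infdist x (- \<Omega>)"

definition pv_op :: "(real^'n \<Rightarrow> real) \<Rightarrow> (real^'n \<Rightarrow> real) \<Rightarrow> real^'n \<Rightarrow> real" where
  "pv_op K u x = Lim (at_right 0)
     (\<lambda>\<epsilon>. LINT y : {y. norm y \<ge> \<epsilon>} | lborel. (u x - u (x + y)) * K y)"

definition prop_P :: "real \<Rightarrow> real \<Rightarrow> (real^'n) set \<Rightarrow> bool" where
  "prop_P R \<kappa> \<Omega> \<longleftrightarrow> (\<forall>r z. 0 < r \<and> r < R \<and> z \<in> frontier \<Omega> \<longrightarrow>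
      (\<exists>xr. xr \<in> - \<Omega> \<and> ball xr (\<kappa> * r) \<subseteq> - \<Omega> \<inter> ball z r))"

end

theory Submission
  imports Defs
begin


lemma ex_dyadic:
  fixes x :: real assumes "1 \<le> x"
  shows "\<exists>k::nat. 2^k \<le> x \<and> x < 2^(k+1)"
proof -
  have "nat \<lfloor>x\<rfloor> \<ge> 1" using assms by linarith
  then obtain k where k: "2^k \<le> nat \<lfloor>x\<rfloor>" "nat \<lfloor>x\<rfloor> < (2::nat)^(k+1)"
    using ex_power_ivl1[of 2 "nat \<lfloor>x\<rfloor>"] by auto
  have "real (2^k) \<le> real (nat \<lfloor>x\<rfloor>)" using k(1) of_nat_le_iff by blast
  then have "(2::int)^k \<le> \<lfloor>x\<rfloor>" using assms by simp
  then have "real_of_int (2^k) \<le> x" using le_floor_iff by blast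
  then have 1: "2^k \<le> x" by simp
  have "nat \<lfloor>x\<rfloor> + 1 \<le> (2::nat)^(k+1)" using k(2) by simp
  then have "real (nat \<lfloor>x\<rfloor> + 1) \<le> real ((2::nat)^(k+1))" using of_nat_le_iff by blast
  then have "x < 2^(k+1)" using assms by simp linarith
  with 1 show ?thesis by blast
qed

lemma ennreal_le_suminf_term: "(f::nat \<Rightarrow> ennreal) k \<le> suminf f"
proof -
  have "sum f {k} \<le> suminf f" by (rule sum_le_suminf) auto
  then show ?thesis by simp
qed

lemma geom_form:
  fixes d a N :: real and k :: nat
  assumes "d > 0"
  shows "(2^k*d) powr (-a) * (V * (2^(k+1)*d) powr N) = V * 2 powr N * d powr (N - a) * (2 powr (N-a))^k"
proof -
  have "(2^k*d) powr (-a) = 2 powr (- a * k) * d powr (-a)"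
    using assms by (simp add: powr_mult powr_realpow[symmetric] powr_powr mult.commute)
  moreover have "(2^(k+1)*d) powr N = 2 powr (N * (k+1)) * d powr N"
    using assms by (simp add: powr_mult powr_realpow[symmetric] powr_powr mult.commute del: power_Suc)
  moreover have "(2 powr (N-a))^k = 2 powr ((N-a)*k)"
    by (simp add: powr_realpow[symmetric] powr_powr)
  moreover have "d powr (N-a) = d powr N * d powr (-a)" by (simp add: powr_add[symmetric])
  moreover have "(2::real) powr (N * (k+1)) = 2 powr N * 2 powr (N*k)" by (simp add: powr_add[symmetric] algebra_simps)
  moreover have "(2::real) powr ((N-a)*k) = 2 powr (N*k) * 2 powr (-a*k)" by (simp add: powr_add[symmetric] algebra_simps)
  ultimately show ?thesis by (simp only:) (simp add: algebra_simps)
qed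

lemma tail_integrable:
  fixes d a :: real
  assumes d: "d > 0" and a: "a > real DIM('a)"
  shows "integrable lborel (\<lambda>y::'a::euclidean_space. indicator {y. d \<le> norm y} y * norm y powr (-a))"
proof -
  define N where "N = real DIM('a)"
  define V where "V = unit_ball_vol N"
  define c' where "c' k = (2^k*d) powr (-a)" for k :: nat
  define B where "B k = ball (0::'a) (2^(k+1)*d)" for k :: nat
  define c where "c k = c' k * (V * (2^(k+1)*d) powr N)" for k :: nat
  have V: "V \<ge> 0" unfolding V_def N_def by simp
  have c_eq: "c k = V * 2 powr N * d powr (N - a) * (2 powr (N-a))^k" for k
    unfolding c_def c'_def using geom_form[OF d] by simp
  have r: "2 powr (N-a) < 1" "0 \<le> 2 powr (N-a)" using a unfolding N_def by (auto intro!: powr_less_one)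
  have summ: "summable c" unfolding c_eq
    by (intro summable_mult summable_geometric) (use r in auto)
  have cnn: "0 \<le> c k" for k unfolding c_eq using V by simp
  have emB: "emeasure lborel (B k) = ennreal (V * (2^(k+1)*d) powr N)" for k
    unfolding B_def V_def N_def using d by (subst emeasure_ball) (auto simp: powr_realpow)
  have meas: "(\<lambda>y::'a. indicator {y. d \<le> norm y} y * norm y powr (-a)) \<in> borel_measurable lborel"
    by measurable
  have pw: "ennreal (norm (indicator {y. d \<le> norm y} y * norm y powr (-a)))
      \<le> (\<Sum>k. ennreal (c' k) * indicator (B k) y)" for y :: 'a
  proof (cases "d \<le> norm y")
    case False then show ?thesis by simp
  next
    case True
    then have "1 \<le> norm y / d" using d by simp
    then obtain k :: nat where k: "2^k \<le> norm y / d" "norm y / d < 2^(k+1)"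
      using ex_dyadic by blast
    have k1: "2^k * d \<le> norm y" using k(1) d by (simp add: field_simps)
    have k2: "norm y < 2^(k+1) * d" using k(2) d by (simp add: field_simps)
    have "norm y powr (-a) \<le> c' k" unfolding c'_def
      using k1 d a by (intro powr_mono2') auto
    then have "ennreal (norm (indicator {y. d \<le> norm y} y * norm y powr (-a))) \<le> ennreal (c' k) * indicator (B k) y"
      using True k2 unfolding B_def by (simp add: dist_norm ennreal_leI)
    also have "\<dots> \<le> (\<Sum>k. ennreal (c' k) * indicator (B k) y)"
      by (rule ennreal_le_suminf_term)
    finally show ?thesis .
  qed
  have "(\<integral>\<^sup>+(y::'a). ennreal (norm (indicator {y. d \<le> norm y} y * norm y powr (-a))) \<partial>lborel)
      \<le> (\<integral>\<^sup>+y. (\<Sum>k. ennreal (c' k) * indicator (B k) y) \<partial>lborel)"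
    by (rule nn_integral_mono) (rule pw)
  also have "\<dots> = (\<Sum>k. \<integral>\<^sup>+y. ennreal (c' k) * indicator (B k) y \<partial>lborel)"
    by (rule nn_integral_suminf) (unfold B_def, intro borel_measurable_times_ennreal borel_measurable_indicator, auto)
  also have "\<dots> = (\<Sum>k. ennreal (c k))"
  proof (rule suminf_cong)
    fix k
    have Bs: "B k \<in> sets lborel" unfolding B_def by simp
    have "0 \<le> c' k" unfolding c'_def by simp
    then show "(\<integral>\<^sup>+y. ennreal (c' k) * indicator (B k) y \<partial>lborel) = ennreal (c k)"
      unfolding nn_integral_cmult_indicator[OF Bs] emB c_def using V d
      by (simp add: ennreal_mult')
  qed
  also have "\<dots> = ennreal (\<Sum>k. c k)"
    by (rule suminf_ennreal2[OF cnn summ])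
  also have "\<dots> < \<infinity>" by simp
  finally show ?thesis by (intro integrableI_bounded meas)
qed


lemma key_bound:
  fixes K :: "real^'n \<Rightarrow> real" and \<Omega> :: "(real^'n) set" and s lam Lam R \<kappa> :: real
  assumes s01: "0 < s"
    and lam: "0 < lam" "lam \<le> Lam"
    and Kmeas: "K \<in> borel_measurable lborel"
    and Kb: "\<And>y. lam * norm y powr (- real CARD('n) - 2 * s) \<le> K y \<and>
             K y \<le> Lam * norm y powr (- real CARD('n) - 2 * s)"
    and R: "0 < R" and kap: "0 < \<kappa>" and op: "open \<Omega>" and P: "prop_P R \<kappa> \<Omega>"
    and x: "x \<in> \<Omega>" and dlt: "2 * dOmega \<Omega> x < R"
  shows "pv_op K (indicator \<Omega>) x \<ge>
     (lam * 3 powr (- (real CARD('n) + 2 * s)) * unit_ball_vol (real CARD('n)) * (2*\<kappa>)^CARD('n))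
       * dOmega \<Omega> x powr (- 2 * s)"
proof (cases "\<Omega> = UNIV")
  case True
  have d0: "dOmega \<Omega> x = 0" unfolding dOmega_def True by (simp add: infdist_def)
  have "pv_op K (indicator \<Omega>) x = Lim (at_right 0) (\<lambda>_::real. 0::real)"
    unfolding pv_op_def True by simp
  also have "\<dots> = 0" by (rule tendsto_Lim) auto
  finally show ?thesis using d0 by simp
next
  case False
  define a where "a = real CARD('n) + 2 * s"
  define d where "d = dOmega \<Omega> x"
  have Kb': "lam * norm y powr (-a) \<le> K y" "K y \<le> Lam * norm y powr (-a)" for y
    using Kb[of y] unfolding a_def by (auto simp: algebra_simps)
  have Knn: "0 \<le> K y" for y using Kb'(1)[of y] lam by (smt (verit) powr_ge_zero mult_nonneg_nonneg)
  have ne: "- \<Omega> \<noteq> {}" using False by auto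
  have cl: "closed (- \<Omega>)" using op by (simp add: closed_Compl)
  have dpos: "d > 0" unfolding d_def dOmega_def
    using infdist_pos_not_in_closed[OF cl ne] x by auto
  obtain z where z: "z \<in> - \<Omega>" "infdist x (- \<Omega>) = dist x z"
    using infdist_attains_inf[OF cl ne] by blast
  have dz: "d = dist x z" unfolding d_def dOmega_def using z by simp
  have ballsub: "ball x d \<subseteq> \<Omega>"
  proof
    fix y assume y: "y \<in> ball x d"
    show "y \<in> \<Omega>"
    proof (rule ccontr)
      assume "y \<notin> \<Omega>"
      then have "infdist x (- \<Omega>) \<le> dist x y" by (intro infdist_le) auto
      then show False using y unfolding d_def dOmega_def by simp
    qed
  qed
  have "z \<in> cball x d" using dz by simp
  also have "cball x d = closure (ball x d)" using dpos by simp
  also have "\<dots> \<subseteq> closure \<Omega>" using ballsub by (rule closure_mono)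
  finally have "z \<in> frontier \<Omega>" using z(1) op by (simp add: frontier_def interior_open)
  moreover have "0 < 2 * d" "2 * d < R" using dpos dlt unfolding d_def by auto
  ultimately obtain xr where xr: "ball xr (\<kappa> * (2 * d)) \<subseteq> - \<Omega> \<inter> ball z (2 * d)"
    using P unfolding prop_P_def by blast
  define h where "h y = indicator (- \<Omega>) (x + y) * K y" for y
  have hzero: "h y = 0" if "norm y < d" for y
  proof -
    have "x + y \<in> ball x d" using that by (simp add: dist_norm)
    then show ?thesis using ballsub unfolding h_def by auto
  qed
  have hnn: "0 \<le> h y" for y unfolding h_def using Knn by simp
  have cs: "- \<Omega> \<in> sets borel" using cl by (simp add: borel_closed)
  have hmeas: "h \<in> borel_measurable lborel"
  proof -
    have "(\<lambda>y::real^'n. x + y) \<in> borel_measurable borel" by (intro continuous_on_add continuous_on_const continuous_on_id borel_measurable_continuous_onI)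
    then have "(\<lambda>y::real^'n. indicator (- \<Omega>) (x + y) :: real) \<in> borel_measurable borel"
      using cs by (intro measurable_compose[OF _ borel_measurable_indicator]) auto
    then show ?thesis unfolding h_def using Kmeas by (intro borel_measurable_times) auto
  qed
  have aD: "a > real DIM(real^'n)" unfolding a_def using s01 by simp
  have i1: "integrable lborel (\<lambda>y::real^'n. Lam * (indicator {y. d \<le> norm y} y * norm y powr (-a)))"
    using tail_integrable[OF dpos aD] by (rule integrable_mult_right)
  have bnd: "norm (h y) \<le> norm (Lam * (indicator {y. d \<le> norm y} y * norm y powr (-a)))" for y :: "real^'n"
  proof (cases "norm y < d")
    case True then show ?thesis using hzero by simp
  next
    case False
    have "h y \<le> K y" unfolding h_def using Knn by (simp add: indicator_def)
    also have "\<dots> \<le> Lam * norm y powr (-a)" by (rule Kb'(2))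
    finally show ?thesis using False hnn lam by simp
  qed
  have hint: "integrable lborel h"
    by (rule Bochner_Integration.integrable_bound[OF i1 hmeas]) (intro AE_I2 bnd)
  define F where "F \<epsilon> = (LINT y:{y. norm y \<ge> \<epsilon>}|lborel. (indicator \<Omega> x - indicator \<Omega> (x + y)) * K y)" for \<epsilon> :: real
  have Feq: "F \<epsilon> = integral\<^sup>L lborel h" if "0 < \<epsilon>" "\<epsilon> \<le> d" for \<epsilon>
    unfolding F_def set_lebesgue_integral_def
  proof (rule Bochner_Integration.integral_cong[OF refl])
    fix y :: "real^'n"
    show "indicator {y. norm y \<ge> \<epsilon>} y *\<^sub>R ((indicator \<Omega> x - indicator \<Omega> (x + y)) * K y) = h y"
    proof (cases "norm y \<ge> \<epsilon>")
      case True then show ?thesis using x unfolding h_def by (simp add: indicator_def)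
    next
      case False then show ?thesis using hzero[of y] that by simp
    qed
  qed
  have "(F \<longlongrightarrow> integral\<^sup>L lborel h) (at_right 0)"
  proof (rule tendsto_eventually)
    show "\<forall>\<^sub>F \<epsilon> in at_right 0. F \<epsilon> = integral\<^sup>L lborel h"
      unfolding eventually_at_right_field using dpos Feq by (intro exI[of _ d]) auto
  qed
  then have pv: "pv_op K (indicator \<Omega>) x = integral\<^sup>L lborel h"
    unfolding pv_op_def F_def[symmetric] by (intro tendsto_Lim) auto
  define r where "r = \<kappa> * (2 * d)"
  define Bx where "Bx = ball (xr - x) r"
  define m where "m = lam * (3 * d) powr (-a)"
  have gle: "m * indicator Bx y \<le> h y" for y
  proof (cases "y \<in> Bx")
    case True
    then have "x + y \<in> ball xr r" unfolding Bx_def by (simp add: dist_norm algebra_simps)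
    then have xy: "x + y \<in> - \<Omega>" "x + y \<in> ball z (2 * d)" using xr unfolding r_def by auto
    then have y0: "y \<noteq> 0" using x by auto
    have "norm y = dist x (x + y)" by (simp add: dist_norm)
    also have "\<dots> \<le> dist x z + dist z (x + y)" by (rule dist_triangle)
    also have "\<dots> < 3 * d" using xy dz by simp
    finally have ny: "norm y < 3 * d" .
    have "m \<le> lam * norm y powr (-a)" unfolding m_def using lam y0 ny aD
      by (intro mult_left_mono powr_mono2') auto
    also have "\<dots> \<le> K y" by (rule Kb')
    finally show ?thesis using True xy unfolding h_def by simp
  next
    case False then show ?thesis using hnn by simp
  qed
  have Bxs: "Bx \<in> sets lborel" unfolding Bx_def by simp
  have Bxf: "emeasure lborel Bx < \<infinity>" unfolding Bx_def by (rule emeasure_lborel_ball_finite)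
  have gint: "integrable lborel (\<lambda>y. m * indicator Bx y)"
    using Bxs Bxf by (intro integrable_mult_right integrable_real_indicator)
  have "integral\<^sup>L lborel (\<lambda>y. m * indicator Bx y) \<le> integral\<^sup>L lborel h"
    by (intro integral_mono gint hint gle)
  moreover have "integral\<^sup>L lborel (\<lambda>y. m * indicator Bx y) = m * measure lborel Bx"
    by (simp add: integral_indicator)
  moreover have "measure lborel Bx = unit_ball_vol (real CARD('n)) * r ^ CARD('n)"
  proof -
    have "0 \<le> r" unfolding r_def using kap dpos by simp
    then show ?thesis using content_ball[of r "xr - x"] unfolding Bx_def by simp
  qed
  moreover have "m * (unit_ball_vol (real CARD('n)) * r ^ CARD('n)) =
     (lam * 3 powr (- (real CARD('n) + 2 * s)) * unit_ball_vol (real CARD('n)) * (2*\<kappa>)^CARD('n))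
       * d powr (- 2 * s)"
  proof -
    have "(3 * d) powr (-a) = 3 powr (-a) * d powr (-a)" using dpos by (simp add: powr_mult)
    moreover have "r ^ CARD('n) = (2*\<kappa>)^CARD('n) * d powr (real CARD('n))"
      unfolding r_def using dpos by (simp add: powr_realpow power_mult_distrib algebra_simps)
    moreover have "d powr (-2 * s) = d powr (-a) * d powr (real CARD('n))"
      unfolding a_def by (simp add: powr_add[symmetric])
    ultimately show ?thesis unfolding m_def a_def by (simp add: algebra_simps)
  qed
  ultimately have "(lam * 3 powr (- (real CARD('n) + 2 * s)) * unit_ball_vol (real CARD('n)) * (2*\<kappa>)^CARD('n))
       * d powr (- 2 * s) \<le> integral\<^sup>L lborel h" by metis
  then show ?thesis using pv unfolding d_def by simp
qed


theorem lemma3p2: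
  fixes s :: real
  assumes n2: "CARD('n) \<ge> 2"
    and s01: "0 < s" "s < 1"
  shows "\<exists>(c0 :: real \<Rightarrow> real \<Rightarrow> real) (d0 :: real \<Rightarrow> (real^'n) set \<Rightarrow> real).
     (\<forall>lam \<kappa>. 0 < lam \<and> 0 < \<kappa> \<longrightarrow> c0 lam \<kappa> > 0) \<and>
     (\<forall>R \<Omega>. d0 R \<Omega> > 0) \<and>
     (\<forall>(K :: real^'n \<Rightarrow> real) lam Lam R \<kappa> (\<Omega> :: (real^'n) set).
        0 < lam \<and> lam \<le> Lam \<and>
        K \<in> borel_measurable lborel \<and>
        (\<forall>y. K y = K (- y)) \<and>
        (\<forall>y. lam * norm y powr (- real CARD('n) - 2 * s) \<le> K y \<and>
             K y \<le> Lam * norm y powr (- real CARD('n) - 2 * s)) \<and>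
        0 < R \<and> 0 < \<kappa> \<and> \<kappa> < R \<and> open \<Omega> \<and> prop_P R \<kappa> \<Omega>
        \<longrightarrow> (\<forall>x\<in>\<Omega>. dOmega \<Omega> x < d0 R \<Omega> \<longrightarrow>
               pv_op K (indicator \<Omega>) x \<ge> c0 lam \<kappa> * dOmega \<Omega> x powr (- 2 * s)))"
  proof -
  define c0 where "c0 = (\<lambda>lam \<kappa>::real. lam * 3 powr (- (real CARD('n) + 2 * s)) * unit_ball_vol (real CARD('n)) * (2*\<kappa>)^CARD('n))"
  define d0 where "d0 = (\<lambda>(R::real) (\<Omega>::(real^'n) set). if 0 < R then R / 2 else 1)"
  show ?thesis
  proof (intro exI[of _ c0] exI[of _ d0] conjI allI impI ballI)
    fix lam \<kappa> :: real assume "0 < lam \<and> 0 < \<kappa>"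
    then show "c0 lam \<kappa> > 0" unfolding c0_def by simp
  next
    fix R :: real and \<Omega> :: "(real^'n) set"
    show "d0 R \<Omega> > 0" unfolding d0_def by simp
  next
    fix K :: "real^'n \<Rightarrow> real" and lam Lam R \<kappa> :: real and \<Omega> :: "(real^'n) set" and x
    assume H: "0 < lam \<and> lam \<le> Lam \<and>
        K \<in> borel_measurable lborel \<and>
        (\<forall>y. K y = K (- y)) \<and>
        (\<forall>y. lam * norm y powr (- real CARD('n) - 2 * s) \<le> K y \<and>
             K y \<le> Lam * norm y powr (- real CARD('n) - 2 * s)) \<and>
        0 < R \<and> 0 < \<kappa> \<and> \<kappa> < R \<and> open \<Omega> \<and> prop_P R \<kappa> \<Omega>"
      and x: "x \<in> \<Omega>" and dl: "dOmega \<Omega> x < d0 R \<Omega>"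
    have "2 * dOmega \<Omega> x < R" using dl H unfolding d0_def by auto
    then show "pv_op K (indicator \<Omega>) x \<ge> c0 lam \<kappa> * dOmega \<Omega> x powr (- 2 * s)"
      unfolding c0_def using key_bound[of s lam Lam K R \<kappa> \<Omega> x] H x s01 by blast
  qed
qed

end
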